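(* Let $H$ be a complex Hilbert space and $\{\mathcal{U}(t)\}_{t\geq 0}$ a strongly continuous semigroup on $H$ with generator $\mathcal{L}$. Let $z\in D(\mathcal{L})\cap D(\mathcal{L}^\dagger)$ with $z\neq0$, $\mathcal{P}:=(\cdot,z)(z,z)^{-1}z$, $\mathcal{Q}:=1-\mathcal{P}$. Let $K:\mathbb{R}_+\to\mathbb{C}$ be the unique continuous solution of $$K(t)=(\mathcal{U}(t)\mathcal{QL}z,\mathcal{Q}\mathcal{L}^\dagger z)(z,z)^{-1}-\int_0^tK(t-s)\,(\mathcal{U}(s)z,\mathcal{Q}\mathcal{L}^\dagger z)(z,z)^{-1}\,ds,$$ and let $\eta_t:=\mathcal{U}(t)\mathcal{QL}z-\int_0^tK(t-s)\,\mathcal{U}(s)z\,ds$. Then $(\eta_t,z)=0$ for all $t\ge0$.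
   Context: The scalar product $(\cdot,\cdot)$ on $H$ is conjugate-linear in its second argument. The generator is $\mathcal{L}x:=\lim_{h\searrow 0}\frac1h[\mathcal{U}(h)x-x]$ on the set $D(\mathcal{L})$ where the limit exists; $\dagger$ denotes the adjoint. Vector-valued integrals are Bochner integrals. *)

theory Defs
  imports "HOL-Analysis.Analysis"
begin

text \<open>The distribution has no complex vector spaces /
complex inner products, so we introduce them as a type class: a real Banach space
with a complex scalar multiplication extending the real one, and a complex inner
product, linear in the first and conjugate-linear in the second argument, which
induces the norm.\<close>

class complex_hilbert = banach +
  fixes scaleC :: "complex \<Rightarrow> 'a \<Rightarrow> 'a" (infixr \<open>*\<^sub>C\<close> 75)
    and cinner :: "'a \<Rightarrow> 'a \<Rightarrow> complex"
  assumes scaleC_add_right: "a *\<^sub>C (x + y) = a *\<^sub>C x + a *\<^sub>C y"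
    and scaleC_add_left: "(a + b) *\<^sub>C x = a *\<^sub>C x + b *\<^sub>C x"
    and scaleC_scaleC: "a *\<^sub>C (b *\<^sub>C x) = (a * b) *\<^sub>C x"
    and scaleC_one: "1 *\<^sub>C x = x"
    and scaleR_scaleC: "r *\<^sub>R x = complex_of_real r *\<^sub>C x"
    and cinner_add_left: "cinner (x + y) w = cinner x w + cinner y w"
    and cinner_scaleC_left: "cinner (a *\<^sub>C x) y = a * cinner x y"
    and cinner_commute: "cinner x y = cnj (cinner y x)"
    and cinner_self_nonneg: "0 \<le> Re (cinner x x)"
    and cinner_self_real: "Im (cinner x x) = 0"
    and cinner_self_eq_zero: "cinner x x = 0 \<longleftrightarrow> x = 0"
    and norm_eq_sqrt_cinner: "norm x = sqrt (Re (cinner x x))"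

definition bounded_clinear_op :: "('a::complex_hilbert \<Rightarrow> 'a) \<Rightarrow> bool" where
  "bounded_clinear_op T \<longleftrightarrow>
     (\<forall>x y. T (x + y) = T x + T y) \<and> (\<forall>c x. T (c *\<^sub>C x) = c *\<^sub>C T x) \<and>
     (\<exists>C. \<forall>x. norm (T x) \<le> C * norm x)"

text \<open>Strongly continuous semigroup \<open>{U t}\<^sub>t\<^sub>\<ge>\<^sub>0\<close> (only \<open>t \<ge> 0\<close> matters).\<close>
definition strongly_continuous_semigroup :: "(real \<Rightarrow> 'a::complex_hilbert \<Rightarrow> 'a) \<Rightarrow> bool" where
  "strongly_continuous_semigroup U \<longleftrightarrow>
     (\<forall>t\<ge>0. bounded_clinear_op (U t)) \<and>
     U 0 = id \<and>
     (\<forall>s\<ge>0. \<forall>t\<ge>0. U (s + t) = U s \<circ> U t) \<and>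
     (\<forall>x. continuous_on {0..} (\<lambda>t. U t x))"

definition gen_dom :: "(real \<Rightarrow> 'a::complex_hilbert \<Rightarrow> 'a) \<Rightarrow> 'a set" where
  "gen_dom U = {x. \<exists>y. ((\<lambda>h. (1 / h) *\<^sub>R (U h x - x)) \<longlongrightarrow> y) (at_right 0)}"

definition gen :: "(real \<Rightarrow> 'a::complex_hilbert \<Rightarrow> 'a) \<Rightarrow> 'a \<Rightarrow> 'a" where
  "gen U x = Lim (at_right 0) (\<lambda>h. (1 / h) *\<^sub>R (U h x - x))"

definition gen_adj_dom :: "(real \<Rightarrow> 'a::complex_hilbert \<Rightarrow> 'a) \<Rightarrow> 'a set" where
  "gen_adj_dom U = {y. \<exists>w. \<forall>x\<in>gen_dom U. cinner (gen U x) y = cinner x w}"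

definition gen_adj :: "(real \<Rightarrow> 'a::complex_hilbert \<Rightarrow> 'a) \<Rightarrow> 'a \<Rightarrow> 'a" where
  "gen_adj U y = (SOME w. \<forall>x\<in>gen_dom U. cinner (gen U x) y = cinner x w)"

definition projP :: "'a::complex_hilbert \<Rightarrow> 'a \<Rightarrow> 'a" where
  "projP z x = (cinner x z / cinner z z) *\<^sub>C z"

definition projQ :: "'a::complex_hilbert \<Rightarrow> 'a \<Rightarrow> 'a" where
  "projQ z x = x - projP z x"

end

theory Submission
  imports Defs
begin

lemma ch_cinner_zero_left[simp]: "cinner (0::'a::complex_hilbert) y = 0"
  using cinner_add_left[of "0::'a" 0 y] by simp

lemma ch_cinner_minus_left: "cinner (- x::'a::complex_hilbert) y = - cinner x y"
proof -
  have "cinner x y + cinner (-x) y = 0" using cinner_add_left[of x "-x" y] by simp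
  then show ?thesis by (metis add.commute eq_neg_iff_add_eq_0)
qed

lemma ch_cinner_diff_left: "cinner (x - y::'a::complex_hilbert) w = cinner x w - cinner y w"
  using cinner_add_left[of x "-y" w] ch_cinner_minus_left[of y w] by simp

lemma ch_cinner_zero_right[simp]: "cinner (x::'a::complex_hilbert) 0 = 0"
  using cinner_commute[of x 0] by simp

lemma ch_cinner_add_right: "cinner (x::'a::complex_hilbert) (y + w) = cinner x y + cinner x w"
  by (metis cinner_commute cinner_add_left complex_cnj_add)

lemma ch_cinner_scaleC_right: "cinner (x::'a::complex_hilbert) (a *\<^sub>C y) = cnj a * cinner x y"
  by (metis cinner_commute cinner_scaleC_left complex_cnj_mult)

lemma ch_cinner_diff_right: "cinner (x::'a::complex_hilbert) (y - w) = cinner x y - cinner x w"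
  by (metis cinner_commute ch_cinner_diff_left complex_cnj_diff)

lemma ch_cinner_scaleR_left: "cinner (r *\<^sub>R (x::'a::complex_hilbert)) y = of_real r * cinner x y"
  by (simp add: scaleR_scaleC cinner_scaleC_left)

lemma ch_cinner_self: "cinner (x::'a::complex_hilbert) x = of_real ((norm x)^2)"
  using cinner_self_real[of x] cinner_self_nonneg[of x]
  by (simp add: norm_eq_sqrt_cinner complex_eq_iff)

lemma ch_scaleC_zero_right[simp]: "a *\<^sub>C (0::'a::complex_hilbert) = 0"
  using scaleC_add_right[of a "0::'a" 0] by simp

lemma ch_scaleC_zero_left[simp]: "0 *\<^sub>C (x::'a::complex_hilbert) = 0"
  using scaleC_add_left[of 0 0 x] by simp

lemma ch_scaleC_minus_right: "a *\<^sub>C (- x::'a::complex_hilbert) = - (a *\<^sub>C x)"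
proof -
  have "a *\<^sub>C x + a *\<^sub>C (-x) = 0" using scaleC_add_right[of a x "-x"] by simp
  then show ?thesis by (metis add.commute eq_neg_iff_add_eq_0)
qed

lemma ch_scaleC_diff_right: "a *\<^sub>C (x - y::'a::complex_hilbert) = a *\<^sub>C x - a *\<^sub>C y"
  using scaleC_add_right[of a x "-y"] ch_scaleC_minus_right[of a y] by simp

lemma ch_scaleC_minus_left: "(- a) *\<^sub>C (x::'a::complex_hilbert) = - (a *\<^sub>C x)"
proof -
  have "a *\<^sub>C x + (-a) *\<^sub>C x = 0" using scaleC_add_left[of a "-a" x] by simp
  then show ?thesis by (metis add.commute eq_neg_iff_add_eq_0)
qed

lemma ch_scaleC_diff_left: "(a - b) *\<^sub>C (x::'a::complex_hilbert) = a *\<^sub>C x - b *\<^sub>C x"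
  using scaleC_add_left[of a "-b" x] ch_scaleC_minus_left[of b x] by simp

lemma ch_norm_scaleC: "norm (a *\<^sub>C (x::'a::complex_hilbert)) = cmod a * norm x"
proof -
  have "cinner (a *\<^sub>C x) (a *\<^sub>C x) = (a * cnj a) * cinner x x"
    by (simp add: cinner_scaleC_left ch_cinner_scaleC_right)
  also have "\<dots> = of_real ((cmod a * norm x)^2)"
    by (simp add: ch_cinner_self complex_norm_square[symmetric] power_mult_distrib)
  finally have "of_real ((norm (a *\<^sub>C x))^2) = (of_real ((cmod a * norm x)^2) :: complex)"
    by (simp add: ch_cinner_self)
  then have "(norm (a *\<^sub>C x))^2 = (cmod a * norm x)^2" using of_real_eq_iff by blast
  then show ?thesis by (simp add: power2_eq_iff_nonneg)
qed

lemma ch_scaleR_scaleC_left: "(r *\<^sub>R a) *\<^sub>C (x::'a::complex_hilbert) = r *\<^sub>R (a *\<^sub>C x)"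
  by (simp add: scaleR_scaleC scaleC_scaleC scaleR_conv_of_real)

lemma ch_scaleC_scaleR_right: "a *\<^sub>C (r *\<^sub>R (x::'a::complex_hilbert)) = r *\<^sub>R (a *\<^sub>C x)"
  by (simp add: scaleR_scaleC scaleC_scaleC mult.commute)

lemma ch_bounded_bilinear_scaleC: "bounded_bilinear (\<lambda>a (x::'a::complex_hilbert). a *\<^sub>C x)"
proof (rule bounded_bilinear.intro)
  show "\<exists>K. \<forall>a (b::'a). norm (a *\<^sub>C b) \<le> norm a * norm b * K"
    by (rule exI[of _ 1]) (simp add: ch_norm_scaleC)
qed (auto simp: scaleC_add_left scaleC_add_right ch_scaleR_scaleC_left ch_scaleC_scaleR_right)

lemma ch_cauchy_schwarz: "cmod (cinner x y) \<le> norm x * norm (y::'a::complex_hilbert)"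
proof (cases "y = 0")
  case True then show ?thesis by simp
next
  case False
  define Y where "Y = (norm y)^2"
  have Y: "Y > 0" using False by (simp add: Y_def)
  define a where "a = cinner x y"
  define l where "l = a / of_real Y"
  have yy: "cinner y y = of_real Y" by (simp add: Y_def ch_cinner_self)
  have yx: "cinner y x = cnj a" by (simp add: a_def cinner_commute[of y x])
  have "cinner (x - l *\<^sub>C y) (x - l *\<^sub>C y) = cinner x x - cnj l * a - l * cnj a + l * cnj l * of_real Y"
    by (simp add: ch_cinner_diff_left ch_cinner_diff_right cinner_scaleC_left ch_cinner_scaleC_right yy yx a_def algebra_simps)
  also have "\<dots> = cinner x x - of_real ((cmod a)^2 / Y)"
  proof -
    have n: "a * cnj a = of_real ((cmod a)^2)" by (rule complex_norm_square[symmetric])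
    have YY: "(of_real Y :: complex) \<noteq> 0" using Y by simp
    have e1: "cnj l * a = (a * cnj a) / of_real Y" by (simp add: l_def)
    have e2: "l * cnj a = (a * cnj a) / of_real Y" by (simp add: l_def)
    have e3: "l * cnj l * of_real Y = (a * cnj a) / of_real Y" unfolding l_def using YY by (simp add: complex_cnj_divide)
    note e = e1 e2 e3
    have e4: "(a * cnj a) / of_real Y = of_real ((cmod a)^2 / Y)" by (simp only: n of_real_divide)
    show ?thesis unfolding e e4 by simp
  qed
  finally have E: "cinner (x - l *\<^sub>C y) (x - l *\<^sub>C y) = cinner x x - of_real ((cmod a)^2 / Y)" .
  have Rx: "Re (cinner x x) = (norm x)^2" by (simp add: ch_cinner_self)
  have "0 \<le> Re (cinner x x - of_real ((cmod a)^2 / Y))"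
    using cinner_self_nonneg[of "x - l *\<^sub>C y"] unfolding E .
  then have "(cmod a)^2 / Y \<le> (norm x)^2" unfolding Rx[symmetric] by simp
  then have "(cmod a)^2 \<le> (norm x)^2 * Y" using Y by (simp add: pos_divide_le_eq)
  also have "\<dots> = (norm x * norm y)^2" unfolding Y_def by (simp add: power_mult_distrib)
  finally show ?thesis unfolding a_def by (rule power2_le_imp_le) simp
qed

lemma ch_bounded_linear_cinner_left: "bounded_linear (\<lambda>x::'a::complex_hilbert. cinner x y)"
proof (rule bounded_linear_intro[of _ "norm y"])
  fix x :: 'a show "norm (cinner x y) \<le> norm x * norm y" using ch_cauchy_schwarz[of x y] by simp
qed (simp_all add: cinner_add_left ch_cinner_scaleR_left scaleR_conv_of_real)

lemma bclin_bounded_linear: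
  assumes "bounded_clinear_op (T :: 'a::complex_hilbert \<Rightarrow> 'a)"
  shows "bounded_linear T"
proof -
  from assms obtain C where add: "\<And>x y. T (x + y) = T x + T y"
    and sc: "\<And>c x. T (c *\<^sub>C x) = c *\<^sub>C T x" and b: "\<And>x. norm (T x) \<le> C * norm x"
    unfolding bounded_clinear_op_def by blast
  show ?thesis
  proof (rule bounded_linear_intro[of _ C])
    fix r x show "T (r *\<^sub>R x) = r *\<^sub>R T x" by (simp add: scaleR_scaleC sc)
  qed (simp_all add: add b mult.commute)
qed

lemma dq_right:
  fixes f :: "real \<Rightarrow> 'b::real_normed_vector"
  assumes "(f has_vector_derivative D) (at t within {t..t+1})"
  shows "((\<lambda>h. (1/h) *\<^sub>R (f (t+h) - f t)) \<longlongrightarrow> D) (at_right 0)"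
proof -
  have "((\<lambda>y. ((f y - f t) - (y - t) *\<^sub>R D) /\<^sub>R norm (y - t)) \<longlongrightarrow> 0) (at t within {t..t+1})"
    using assms unfolding has_vector_derivative_def has_derivative_at_within by blast
  then have "((\<lambda>y. ((f y - f t) - (y - t) *\<^sub>R D) /\<^sub>R norm (y - t)) \<longlongrightarrow> 0) (filtermap (\<lambda>x. x + t) (at_right 0))"
    by (simp add: at_within_Icc_at_right at_right_to_0[symmetric])
  then have L: "((\<lambda>h. ((f (h+t) - f t) - h *\<^sub>R D) /\<^sub>R norm h) \<longlongrightarrow> 0) (at_right 0)"
    by (simp add: filterlim_filtermap)
  have ev: "\<forall>\<^sub>F h in at_right 0. ((f (h+t) - f t) - h *\<^sub>R D) /\<^sub>R norm h = (1/h) *\<^sub>R (f (t+h) - f t) - D"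
  proof (rule eventually_at_rightI[of 0 1])
    fix h :: real assume "h \<in> {0<..<1}"
    then have "h > 0" by simp
    then show "((f (h+t) - f t) - h *\<^sub>R D) /\<^sub>R norm h = (1/h) *\<^sub>R (f (t+h) - f t) - D"
      by (simp add: add.commute scaleR_diff_right inverse_eq_divide)
  qed simp
  show ?thesis
    by (rule LIM_zero_cancel) (rule Lim_transform_eventually[OF L ev])
qed


lemma sg_bl: "strongly_continuous_semigroup U \<Longrightarrow> t \<ge> 0 \<Longrightarrow> bounded_linear (U t)"
  unfolding strongly_continuous_semigroup_def using bclin_bounded_linear by blast

lemma sg_0: "strongly_continuous_semigroup U \<Longrightarrow> U 0 x = x"
  unfolding strongly_continuous_semigroup_def by simp

lemma sg_add: "strongly_continuous_semigroup U \<Longrightarrow> s \<ge> 0 \<Longrightarrow> t \<ge> 0 \<Longrightarrow> U (s + t) x = U s (U t x)"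
  unfolding strongly_continuous_semigroup_def by simp

lemma sg_cont: "strongly_continuous_semigroup U \<Longrightarrow> continuous_on {0..} (\<lambda>t. U t x)"
  unfolding strongly_continuous_semigroup_def by simp

lemma gen_int:
  fixes U :: "real \<Rightarrow> 'a::complex_hilbert \<Rightarrow> 'a"
  assumes sg: "strongly_continuous_semigroup U" and t: "t \<ge> 0"
  shows "integral {0..t} (\<lambda>s. U s x) \<in> gen_dom U \<and> gen U (integral {0..t} (\<lambda>s. U s x)) = U t x - x"
proof -
  define f where "f = (\<lambda>s. U s x)"
  define \<Phi> where "\<Phi> a = integral {0..a} f" for a
  define v where "v = \<Phi> t"
  have cont: "continuous_on {0..} f" unfolding f_def by (rule sg_cont[OF sg])
  have contab: "continuous_on {a..b} f" if "0 \<le> a" for a b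
    by (rule continuous_on_subset[OF cont]) (use that in auto)
  have int: "f integrable_on {a..b}" if "0 \<le> a" for a b
    using contab[OF that] by (rule integrable_continuous_real)
  have key: "U h v - v = (\<Phi> (t+h) - \<Phi> t) - (\<Phi> (0+h) - \<Phi> 0)" if h: "h > 0" for h
  proof -
    have "U h v = integral {0..t} (U h \<circ> f)"
      unfolding v_def \<Phi>_def by (rule integral_linear[OF int sg_bl[OF sg], symmetric]) (use h in auto)
    also have "\<dots> = integral {0..t} (\<lambda>s. f (s + h))"
    proof (rule integral_cong)
      fix s assume "s \<in> {0..t}"
      then show "(U h \<circ> f) s = f (s + h)"
        using sg_add[OF sg, of h s x] h by (simp add: f_def add.commute)
    qed
    also have "\<dots> = integral {h..t+h} f"
      using integral_shift_real_ivl[of h h "t+h" f] by simp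
    finally have Uh: "U h v = integral {h..t+h} f" .
    have "\<Phi> h + integral {h..t+h} f = \<Phi> (t+h)"
      unfolding \<Phi>_def using Henstock_Kurzweil_Integration.integral_combine[where a=0 and c=h and b="t+h" and f=f] int[of 0 "t+h"] h t by simp
    then show ?thesis using Uh by (simp add: v_def \<Phi>_def algebra_simps)
  qed
  have D: "(\<Phi> has_vector_derivative f a) (at a within {a..a+1})" if "a \<ge> 0" for a
  proof -
    have "(\<Phi> has_vector_derivative f a) (at a within {0..a+1})"
      unfolding \<Phi>_def by (rule integral_has_vector_derivative[OF contab]) (use that in auto)
    then show ?thesis by (rule has_vector_derivative_within_subset) (use that in auto)
  qed
  have L: "((\<lambda>h. (1/h) *\<^sub>R (\<Phi> (t+h) - \<Phi> t) - (1/h) *\<^sub>R (\<Phi> (0+h) - \<Phi> 0)) \<longlongrightarrow> f t - f 0) (at_right 0)"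
    by (intro tendsto_diff dq_right D) (use t in auto)
  have ev: "\<forall>\<^sub>F h in at_right 0. (1/h) *\<^sub>R (\<Phi> (t+h) - \<Phi> t) - (1/h) *\<^sub>R (\<Phi> (0+h) - \<Phi> 0) = (1 / h) *\<^sub>R (U h v - v)"
  proof (rule eventually_at_rightI[of 0 1])
    fix h :: real assume "h \<in> {0<..<1}"
    then show "(1/h) *\<^sub>R (\<Phi> (t+h) - \<Phi> t) - (1/h) *\<^sub>R (\<Phi> (0+h) - \<Phi> 0) = (1 / h) *\<^sub>R (U h v - v)"
      using key[of h] by (simp add: scaleR_diff_right)
  qed simp
  have L2: "((\<lambda>h. (1 / h) *\<^sub>R (U h v - v)) \<longlongrightarrow> U t x - x) (at_right 0)"
    using Lim_transform_eventually[OF L ev] by (simp add: f_def sg_0[OF sg])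
  have vv: "v = integral {0..t} (\<lambda>s. U s x)" by (simp add: v_def \<Phi>_def f_def)
  show ?thesis
    unfolding gen_dom_def gen_def vv[symmetric]
    using L2 tendsto_Lim[OF trivial_limit_at_right_real L2] by blast
qed


lemma cinner_cont:
  fixes U :: "real \<Rightarrow> 'a::complex_hilbert \<Rightarrow> 'a"
  assumes sg: "strongly_continuous_semigroup U"
  shows "continuous_on {0..} (\<lambda>s. cinner (U s x) w)"
  by (rule bounded_linear.continuous_on[OF ch_bounded_linear_cinner_left sg_cont[OF sg]])

lemma inner_deriv:
  fixes U :: "real \<Rightarrow> 'a::complex_hilbert \<Rightarrow> 'a"
  assumes sg: "strongly_continuous_semigroup U"
    and w: "\<forall>y\<in>gen_dom U. cinner (gen U y) z = cinner y w"
    and t: "t \<in> {0..T}"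
  shows "((\<lambda>t. cinner (U t x) z) has_vector_derivative cinner (U t x) w) (at t within {0..T})"
proof -
  define \<psi> where "\<psi> s = cinner (U s x) w" for s
  have contab: "continuous_on {a..b} \<psi>" if "0 \<le> a" for a b
    unfolding \<psi>_def by (rule continuous_on_subset[OF cinner_cont[OF sg]]) (use that in auto)
  have eq: "cinner (U s x) z = cinner x z + integral {0..s} \<psi>" if s: "s \<in> {0..T}" for s
  proof -
    have s0: "s \<ge> 0" using s by simp
    note gi = gen_int[OF sg s0, of x]
    have "cinner (U s x) z - cinner x z = cinner (gen U (integral {0..s} (\<lambda>s. U s x))) z"
      using gi by (simp add: ch_cinner_diff_left)
    also have "\<dots> = cinner (integral {0..s} (\<lambda>s. U s x)) w" using w gi by blast
    also have "\<dots> = integral {0..s} ((\<lambda>y. cinner y w) \<circ> (\<lambda>s. U s x))"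
      by (rule integral_linear[symmetric, OF integrable_continuous_real ch_bounded_linear_cinner_left])
         (rule continuous_on_subset[OF sg_cont[OF sg]], auto)
    finally have "cinner (U s x) z - cinner x z = integral {0..s} \<psi>" by (simp add: \<psi>_def[abs_def] o_def)
    then show ?thesis by (simp add: diff_eq_eq add.commute)
  qed
  have "((\<lambda>s. cinner x z + integral {0..s} \<psi>) has_vector_derivative 0 + \<psi> t) (at t within {0..T})"
    by (intro has_vector_derivative_add has_vector_derivative_const integral_has_vector_derivative contab t) simp
  then show ?thesis
    by (intro has_vector_derivative_transform[OF t eq]) (auto simp: \<psi>_def)
qed

lemma int_flip:
  fixes f :: "real \<Rightarrow> 'b::real_normed_vector"
  shows "integral {0..t} (\<lambda>s. f (t - s)) = integral {0..t} f"
proof -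
  have "integral {0..t} (\<lambda>s. f (t - s)) = integral {-t..0} (\<lambda>y. f (- y))"
    using integral_shift_real_ivl[where a="-t" and c="-t" and b=0 and f="\<lambda>y. f (- y)"] by simp
  also have "\<dots> = integral {0..t} f"
    using Henstock_Kurzweil_Integration.integral_reflect_real[of t 0 f] by simp
  finally show ?thesis .
qed

lemma deriv_int_upper:
  fixes f :: "real \<Rightarrow> 'b::banach"
  assumes c: "continuous_on {0..T} f" and t: "t \<in> {0..T}"
  shows "((\<lambda>t. integral {t..T} f) has_vector_derivative - f t) (at t within {0..T})"
proof -
  have d: "((\<lambda>t. integral {0..T} f - integral {0..t} f) has_vector_derivative 0 - f t) (at t within {0..T})"
    by (intro has_vector_derivative_diff has_vector_derivative_const integral_has_vector_derivative c t)
  have e: "integral {x..T} f = integral {0..T} f - integral {0..x} f" if "x \<in> {0..T}" for x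
    using Henstock_Kurzweil_Integration.integral_combine[where a=0 and c=x and b=T and f=f]
      integrable_continuous_real[OF c] that by (simp add: algebra_simps)
  show ?thesis using has_vector_derivative_transform[OF t e d] by simp
qed


lemma contK_int: "continuous_on {a..b} (f::real \<Rightarrow> 'b::banach) \<Longrightarrow> f integrable_on {a..b}"
  by (rule integrable_continuous_real)

lemma conv_deriv:
  fixes K \<phi> \<Phi> :: "real \<Rightarrow> complex"
  assumes Kc: "continuous_on {0..T} K" and \<phi>c: "continuous_on {0..T} \<phi>"
    and \<Phi>d: "\<And>s. s \<in> {0..T} \<Longrightarrow> (\<Phi> has_vector_derivative \<phi> s) (at s within {0..T})"
    and t: "t \<in> {0..T}"
  shows "((\<lambda>t. integral {0..t} (\<lambda>s. K (t - s) * \<Phi> s)) has_vector_derivative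
           (K t * \<Phi> 0 + integral {0..t} (\<lambda>s. K (t - s) * \<phi> s))) (at t within {0..T})"
proof -
  have T: "0 \<le> T" using t by simp
  define \<phi>e where "\<phi>e v = \<phi> (max 0 v)" for v
  define \<Phi>e where "\<Phi>e v = \<Phi> 0 + (integral {-T..v} \<phi>e - integral {-T..0} \<phi>e)" for v
  have \<phi>ec: "continuous_on {-T..T} \<phi>e"
    unfolding \<phi>e_def[abs_def] by (rule continuous_on_compose2[OF \<phi>c]) (auto intro!: continuous_intros)
  have \<phi>ec2: "continuous_on {a..b} \<phi>e" if "-T \<le> a" "b \<le> T" for a b
    by (rule continuous_on_subset[OF \<phi>ec]) (use that in auto)
  have \<Phi>ed: "(\<Phi>e has_vector_derivative \<phi>e v) (at v within {-T..T})" if v: "v \<in> {-T..T}" for v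
  proof -
    have "((\<lambda>v. \<Phi> 0 + (integral {-T..v} \<phi>e - integral {-T..0} \<phi>e)) has_vector_derivative 0 + (\<phi>e v - 0)) (at v within {-T..T})"
      by (intro has_vector_derivative_add has_vector_derivative_diff has_vector_derivative_const
          integral_has_vector_derivative \<phi>ec v)
    then show ?thesis by (simp add: \<Phi>e_def[abs_def])
  qed
  have \<Phi>ec: "continuous_on {-T..T} \<Phi>e"
    by (rule continuous_on_vector_derivative[OF \<Phi>ed])
  have \<Phi>e_pos: "\<Phi>e v = \<Phi> v" if v: "v \<in> {0..T}" for v
  proof -
    have "integral {-T..0} \<phi>e + integral {0..v} \<phi>e = integral {-T..v} \<phi>e"
      using Henstock_Kurzweil_Integration.integral_combine[where a="-T" and c=0 and b=v and f=\<phi>e]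
        contK_int[OF \<phi>ec2[of "-T" v]] v by simp
    moreover have "integral {0..v} \<phi>e = integral {0..v} \<phi>"
      by (rule integral_cong) (simp add: \<phi>e_def)
    moreover have "(\<phi> has_integral (\<Phi> v - \<Phi> 0)) {0..v}"
      by (rule fundamental_theorem_of_calculus)
         (use v in \<open>auto intro!: has_vector_derivative_within_subset[OF \<Phi>d]\<close>)
    ultimately have "integral {-T..v} \<phi>e - integral {-T..0} \<phi>e = \<Phi> v - \<Phi> 0"
      by (metis add_diff_cancel_left' integral_unique)
    then show ?thesis unfolding \<Phi>e_def by simp
  qed
  have \<Phi>e_neg: "\<Phi>e v = \<Phi> 0 + of_real v * \<phi> 0" if v: "v \<in> {-T..0}" for v
  proof -
    have "integral {-T..v} \<phi>e + integral {v..0} \<phi>e = integral {-T..0} \<phi>e"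
      using Henstock_Kurzweil_Integration.integral_combine[where a="-T" and c=v and b=0 and f=\<phi>e]
        contK_int[OF \<phi>ec2[of "-T" 0]] v T by simp
    moreover have "integral {v..0} \<phi>e = integral {v..0} (\<lambda>_. \<phi> 0)"
      by (rule integral_cong) (simp add: \<phi>e_def)
    moreover have "integral {v..0} (\<lambda>_. \<phi> 0) = - of_real v * \<phi> 0"
      using v by (simp add: scaleR_conv_of_real)
    ultimately have "integral {-T..v} \<phi>e - integral {-T..0} \<phi>e = of_real v * \<phi> 0"
      by (metis add_diff_cancel_left' minus_diff_eq minus_mult_left)
    then show ?thesis unfolding \<Phi>e_def by simp
  qed
  have Kc2: "continuous_on {a..b} K" if "0 \<le> a" "b \<le> T" for a b
    by (rule continuous_on_subset[OF Kc]) (use that in auto)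
  have LB: "((\<lambda>x. integral (cbox 0 T) (\<lambda>u. K u * \<Phi>e (x - u))) has_vector_derivative
              integral (cbox 0 T) (\<lambda>u. K u * \<phi>e (t - u))) (at t within {0..T})"
  proof (rule leibniz_rule_vector_derivative[where U="{0..T}"])
    fix x u assume x: "x \<in> {0..T}" and u: "u \<in> cbox 0 T"
    have d1: "((\<lambda>x. x - u) has_vector_derivative 1) (at x within {0..T})"
      by (rule has_vector_derivative_eq_rhs, (rule derivative_intros)+, simp)
    have d2: "(\<Phi>e has_vector_derivative \<phi>e (x - u)) (at (x - u) within (\<lambda>x. x - u) ` {0..T})"
      by (rule has_vector_derivative_within_subset[OF \<Phi>ed]) (use x u in auto)
    have "((\<Phi>e \<circ> (\<lambda>x. x - u)) has_vector_derivative 1 *\<^sub>R \<phi>e (x - u)) (at x within {0..T})"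
      by (rule vector_diff_chain_within[OF d1 d2])
    then have "((\<lambda>x. \<Phi>e (x - u)) has_vector_derivative \<phi>e (x - u)) (at x within {0..T})"
      by (simp add: o_def)
    then show "((\<lambda>x. K u * \<Phi>e (x - u)) has_vector_derivative K u * \<phi>e (x - u)) (at x within {0..T})"
      by (rule has_vector_derivative_mult_right)
  next
    fix x assume x: "x \<in> {0..T}"
    have "continuous_on {0..T} (\<lambda>u. \<Phi>e (x - u))"
      by (rule continuous_on_compose2[OF \<Phi>ec]) (use x in \<open>auto intro!: continuous_intros\<close>)
    then have "continuous_on {0..T} (\<lambda>u. K u * \<Phi>e (x - u))"
      by (intro continuous_on_mult Kc)
    then show "(\<lambda>u. K u * \<Phi>e (x - u)) integrable_on cbox 0 T"
      by (simp add: contK_int)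
  next
    have c1: "continuous_on ({0..T} \<times> cbox 0 T) (\<lambda>p. K (snd p))"
      by (rule continuous_on_compose2[OF Kc]) (auto intro!: continuous_intros)
    have c2: "continuous_on ({0..T} \<times> cbox 0 T) (\<lambda>p. \<phi>e (fst p - snd p))"
      by (rule continuous_on_compose2[OF \<phi>ec]) (auto intro!: continuous_intros)
    show "continuous_on ({0..T} \<times> cbox 0 T) (\<lambda>(x, u). K u * \<phi>e (x - u))"
      using continuous_on_mult[OF c1 c2] by (simp add: case_prod_beta)
  qed (use t in auto)
  define I where "I x = integral {x..T} K" for x
  define C where "C x = integral {x..T} (\<lambda>u. K u * of_real (x - u))" for x
  have gcont: "continuous_on {0..T} (\<lambda>u. K u * \<Phi>e (x - u))" if x: "x \<in> {0..T}" for x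
  proof -
    have "continuous_on {0..T} (\<lambda>u. \<Phi>e (x - u))"
      by (rule continuous_on_compose2[OF \<Phi>ec]) (use x in \<open>auto intro!: continuous_intros\<close>)
    then show ?thesis by (intro continuous_on_mult Kc)
  qed
  have gcont': "continuous_on {0..T} (\<lambda>u. K u * \<phi>e (x - u))" if x: "x \<in> {0..T}" for x
  proof -
    have "continuous_on {0..T} (\<lambda>u. \<phi>e (x - u))"
      by (rule continuous_on_compose2[OF \<phi>ec]) (use x in \<open>auto intro!: continuous_intros\<close>)
    then show ?thesis by (intro continuous_on_mult Kc)
  qed
  have Kxc: "continuous_on {0..T} (\<lambda>u. K u * of_real (x - u))" for x
    by (intro continuous_on_mult Kc continuous_intros)
  have uKc: "continuous_on {0..T} (\<lambda>u. of_real u * K u)"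
    by (intro continuous_on_mult Kc continuous_intros)
  have sub: "f integrable_on {a..b}" if "continuous_on {0..T} f" "0 \<le> a" "b \<le> T" for f :: "real \<Rightarrow> complex" and a b
    by (rule contK_int, rule continuous_on_subset[OF that(1)]) (use that in auto)
  have Mx: "integral (cbox 0 T) (\<lambda>u. K u * \<Phi>e (x - u)) =
      integral {0..x} (\<lambda>s. K (x - s) * \<Phi> s) + \<Phi> 0 * I x + \<phi> 0 * C x" if x: "x \<in> {0..T}" for x
  proof -
    have sp: "integral {0..x} (\<lambda>u. K u * \<Phi>e (x - u)) + integral {x..T} (\<lambda>u. K u * \<Phi>e (x - u))
        = integral {0..T} (\<lambda>u. K u * \<Phi>e (x - u))"
      using Henstock_Kurzweil_Integration.integral_combine[where a=0 and c=x and b=T and f="\<lambda>u. K u * \<Phi>e (x - u)"]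
        sub[OF gcont[OF x], of 0 T] x by simp
    have p1: "integral {0..x} (\<lambda>u. K u * \<Phi>e (x - u)) = integral {0..x} (\<lambda>u. K u * \<Phi> (x - u))"
      by (rule integral_cong) (use x in \<open>auto simp: \<Phi>e_pos\<close>)
    also have "\<dots> = integral {0..x} (\<lambda>s. K (x - s) * \<Phi> s)"
      using int_flip[where f="\<lambda>u. K u * \<Phi> (x - u)" and t=x] by simp
    finally have p1: "integral {0..x} (\<lambda>u. K u * \<Phi>e (x - u)) = integral {0..x} (\<lambda>s. K (x - s) * \<Phi> s)" .
    have "integral {x..T} (\<lambda>u. K u * \<Phi>e (x - u)) = integral {x..T} (\<lambda>u. \<Phi> 0 * K u + \<phi> 0 * (K u * of_real (x - u)))"
      by (rule integral_cong) (use x in \<open>auto simp: \<Phi>e_neg algebra_simps\<close>)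
    also have "\<dots> = \<Phi> 0 * I x + \<phi> 0 * C x"
      unfolding I_def C_def
      by (subst integral_add) (use x in \<open>auto intro!: sub continuous_intros Kc simp: integral_mult_right\<close>)
    finally have p2: "integral {x..T} (\<lambda>u. K u * \<Phi>e (x - u)) = \<Phi> 0 * I x + \<phi> 0 * C x" .
    show ?thesis using sp p1 p2 by (simp add: add.assoc)
  qed
  have DV: "integral (cbox 0 T) (\<lambda>u. K u * \<phi>e (t - u)) = integral {0..t} (\<lambda>s. K (t - s) * \<phi> s) + \<phi> 0 * I t"
  proof -
    have sp: "integral {0..t} (\<lambda>u. K u * \<phi>e (t - u)) + integral {t..T} (\<lambda>u. K u * \<phi>e (t - u))
        = integral {0..T} (\<lambda>u. K u * \<phi>e (t - u))"
      using Henstock_Kurzweil_Integration.integral_combine[where a=0 and c=t and b=T and f="\<lambda>u. K u * \<phi>e (t - u)"]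
        sub[OF gcont'[OF t], of 0 T] t by simp
    have "integral {0..t} (\<lambda>u. K u * \<phi>e (t - u)) = integral {0..t} (\<lambda>u. K u * \<phi> (t - u))"
      by (rule integral_cong) (use t in \<open>auto simp: \<phi>e_def\<close>)
    also have "\<dots> = integral {0..t} (\<lambda>s. K (t - s) * \<phi> s)"
      using int_flip[where f="\<lambda>u. K u * \<phi> (t - u)" and t=t] by simp
    finally have p1: "integral {0..t} (\<lambda>u. K u * \<phi>e (t - u)) = integral {0..t} (\<lambda>s. K (t - s) * \<phi> s)" .
    have "integral {t..T} (\<lambda>u. K u * \<phi>e (t - u)) = integral {t..T} (\<lambda>u. \<phi> 0 * K u)"
      by (rule integral_cong) (use t in \<open>auto simp: \<phi>e_def\<close>)
    then have p2: "integral {t..T} (\<lambda>u. K u * \<phi>e (t - u)) = \<phi> 0 * I t"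
      by (simp add: I_def)
    show ?thesis using sp p1 p2 by simp
  qed
  have Id: "(I has_vector_derivative - K x) (at x within {0..T})" if "x \<in> {0..T}" for x
    unfolding I_def[abs_def] by (rule deriv_int_upper[OF Kc that])
  have Ceq: "C x = of_real x * I x - integral {x..T} (\<lambda>u. of_real u * K u)" if x: "x \<in> {0..T}" for x
  proof -
    have "C x = integral {x..T} (\<lambda>u. of_real x * K u - of_real u * K u)"
      unfolding C_def by (rule integral_cong) (simp add: algebra_simps)
    also have "\<dots> = of_real x * I x - integral {x..T} (\<lambda>u. of_real u * K u)"
      unfolding I_def
      by (subst integral_diff) (use x in \<open>auto intro!: integrable_on_cmult_left sub Kc uKc simp: integral_mult_right\<close>)
    finally show ?thesis .
  qed
  have ofr: "((\<lambda>x. complex_of_real x) has_vector_derivative 1) (at x within S)" for x S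
    using has_vector_derivative_of_real[OF DERIV_ident] by simp
  have Cd: "(C has_vector_derivative I t) (at t within {0..T})"
  proof -
    have "((\<lambda>x. of_real x * I x - integral {x..T} (\<lambda>u. of_real u * K u)) has_vector_derivative
         (of_real t * (- K t) + 1 * I t) - (- (of_real t * K t))) (at t within {0..T})"
      by (intro has_vector_derivative_diff has_vector_derivative_mult ofr Id t deriv_int_upper[OF uKc t])
    then have "((\<lambda>x. of_real x * I x - integral {x..T} (\<lambda>u. of_real u * K u)) has_vector_derivative I t) (at t within {0..T})"
      by simp
    then show ?thesis
      using has_vector_derivative_transform[where f="\<lambda>x. of_real x * I x - integral {x..T} (\<lambda>u. of_real u * K u)" and g=C, OF t Ceq] by blast
  qed
  have Leq: "integral {0..x} (\<lambda>s. K (x - s) * \<Phi> s) =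
      integral (cbox 0 T) (\<lambda>u. K u * \<Phi>e (x - u)) - \<Phi> 0 * I x - \<phi> 0 * C x" if "x \<in> {0..T}" for x
    using Mx[OF that] by simp
  have "((\<lambda>x. integral (cbox 0 T) (\<lambda>u. K u * \<Phi>e (x - u)) - \<Phi> 0 * I x - \<phi> 0 * C x) has_vector_derivative
      integral (cbox 0 T) (\<lambda>u. K u * \<phi>e (t - u)) - \<Phi> 0 * (- K t) - \<phi> 0 * I t) (at t within {0..T})"
    by (intro has_vector_derivative_diff LB has_vector_derivative_mult_right Id Cd t)
  then have "((\<lambda>x. integral {0..x} (\<lambda>s. K (x - s) * \<Phi> s)) has_vector_derivative
      integral (cbox 0 T) (\<lambda>u. K u * \<phi>e (t - u)) - \<Phi> 0 * (- K t) - \<phi> 0 * I t) (at t within {0..T})"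
    using has_vector_derivative_transform[where f="\<lambda>x. integral (cbox 0 T) (\<lambda>u. K u * \<Phi>e (x - u)) - \<Phi> 0 * I x - \<phi> 0 * C x"
        and g="\<lambda>x. integral {0..x} (\<lambda>s. K (x - s) * \<Phi> s)", OF t Leq] by blast
  then show ?thesis unfolding DV by (simp add: algebra_simps)
qed

theorem corollary2:
  fixes U :: "real \<Rightarrow> 'a::complex_hilbert \<Rightarrow> 'a"
    and z :: 'a
    and K :: "real \<Rightarrow> complex"
    and \<eta> :: "real \<Rightarrow> 'a"
  assumes sg: "strongly_continuous_semigroup U"
    and zdom: "z \<in> gen_dom U" "z \<in> gen_adj_dom U"
    and znz: "z \<noteq> 0"
    and Kcont: "continuous_on {0..} K"
    and Keq: "\<forall>t\<ge>0. K t =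
        cinner (U t (projQ z (gen U z))) (projQ z (gen_adj U z)) / cinner z z
        - integral {0..t} (\<lambda>s. K (t - s) * (cinner (U s z) (projQ z (gen_adj U z)) / cinner z z))"
    and eta: "\<forall>t\<ge>0. \<eta> t = U t (projQ z (gen U z)) - integral {0..t} (\<lambda>s. K (t - s) *\<^sub>C U s z)"
  shows "\<forall>t\<ge>0. cinner (\<eta> t) z = 0"
proof (intro allI impI)
  fix T :: real assume T: "T \<ge> 0"
  define N where "N = cinner z z"
  have N: "N \<noteq> 0" using znz cinner_self_eq_zero[of z] by (simp add: N_def)
  define w where "w = gen_adj U z"
  have wprop: "\<forall>y\<in>gen_dom U. cinner (gen U y) z = cinner y w"
  proof -
    have "\<exists>w. \<forall>x\<in>gen_dom U. cinner (gen U x) z = cinner x w" using zdom(2) by (simp add: gen_adj_dom_def)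
    then show ?thesis unfolding w_def gen_adj_def by (rule someI_ex)
  qed
  define q where "q = projQ z w"
  define b where "b = cnj (cinner w z / N)"
  have wq: "w = q + (cinner w z / N) *\<^sub>C z"
    by (simp add: q_def projQ_def projP_def N_def)
  have cw: "cinner y w = cinner y q + b * cinner y z" for y
    by (subst wq) (simp add: ch_cinner_add_right ch_cinner_scaleC_right b_def)
  define x0 where "x0 = projQ z (gen U z)"
  have x0z: "cinner x0 z = 0"
    using N by (simp add: x0_def projQ_def projP_def ch_cinner_diff_left cinner_scaleC_left N_def)
  define h where "h s = cinner (U s x0) z / N" for s
  define g where "g s = cinner (U s z) z / N" for s
  define A0 where "A0 s = cinner (U s x0) q / N" for s
  define Az where "Az s = cinner (U s z) q / N" for s
  define m where "m x = integral {0..x} (\<lambda>s. K (x - s) * g s)" for x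
  have Keq': "K x = A0 x - integral {0..x} (\<lambda>s. K (x - s) * Az s)" if "x \<ge> 0" for x
    using Keq that by (simp add: A0_def Az_def q_def w_def x0_def N_def)
  have Ucont: "continuous_on {0..T} (\<lambda>s. U s y)" for y
    by (rule continuous_on_subset[OF sg_cont[OF sg]]) auto
  have Kc: "continuous_on {0..T} K"
    by (rule continuous_on_subset[OF Kcont]) auto
  have icont: "continuous_on {0..T} (\<lambda>s. cinner (U s y) v)" for y v
    by (rule continuous_on_subset[OF cinner_cont[OF sg]]) auto
  have hd: "(h has_vector_derivative A0 x + b * h x) (at x within {0..T})" if x: "x \<in> {0..T}" for x
  proof -
    have "((\<lambda>t. cinner (U t x0) z / N) has_vector_derivative cinner (U x x0) w / N) (at x within {0..T})"
      by (intro has_vector_derivative_divide inner_deriv[OF sg wprop x])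
    then show ?thesis unfolding h_def[abs_def] A0_def cw by (simp add: add_divide_distrib)
  qed
  have gd: "(g has_vector_derivative Az x + b * g x) (at x within {0..T})" if x: "x \<in> {0..T}" for x
  proof -
    have "((\<lambda>t. cinner (U t z) z / N) has_vector_derivative cinner (U x z) w / N) (at x within {0..T})"
      by (intro has_vector_derivative_divide inner_deriv[OF sg wprop x])
    then show ?thesis unfolding g_def[abs_def] Az_def cw by (simp add: add_divide_distrib)
  qed
  have g0: "g 0 = 1" using N by (simp add: g_def sg_0[OF sg] N_def)
  have h0: "h 0 = 0" by (simp add: h_def sg_0[OF sg] x0z)
  have m0: "m 0 = 0" by (simp add: m_def)
  have Azc: "continuous_on {0..T} Az" unfolding Az_def[abs_def] using N by (intro continuous_intros icont) auto
  have gc: "continuous_on {0..T} g" unfolding g_def[abs_def] using N by (intro continuous_intros icont) auto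
  have Kshift: "continuous_on {0..x} (\<lambda>s. K (x - s))" if "x \<in> {0..T}" for x
    by (rule continuous_on_compose2[OF Kcont]) (auto intro!: continuous_intros)
  have md: "(m has_vector_derivative A0 x + b * m x) (at x within {0..T})" if x: "x \<in> {0..T}" for x
  proof -
    have d: "(m has_vector_derivative K x * g 0 + integral {0..x} (\<lambda>s. K (x - s) * (Az s + b * g s))) (at x within {0..T})"
      unfolding m_def[abs_def]
      by (rule conv_deriv[OF Kc _ gd x]) (intro continuous_intros Azc gc)
    have sub: "continuous_on {0..x} f" if "continuous_on {0..T} f" for f :: "real \<Rightarrow> complex"
      by (rule continuous_on_subset[OF that]) (use x in auto)
    have "integral {0..x} (\<lambda>s. K (x - s) * (Az s + b * g s)) =
        integral {0..x} (\<lambda>s. K (x - s) * Az s + b * (K (x - s) * g s))"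
      by (simp add: algebra_simps)
    also have "\<dots> = integral {0..x} (\<lambda>s. K (x - s) * Az s) + b * m x"
    proof -
      have c1: "continuous_on {0..x} (\<lambda>s. K (x - s) * Az s)"
        by (intro continuous_on_mult Kshift[OF x] sub[OF Azc])
      have c2: "continuous_on {0..x} (\<lambda>s. b * (K (x - s) * g s))"
        by (intro continuous_on_mult continuous_on_const Kshift[OF x] sub[OF gc])
      show ?thesis
        by (subst integral_add) (auto intro!: integrable_continuous_real c1 c2 simp: m_def)
    qed
    finally have "K x * g 0 + integral {0..x} (\<lambda>s. K (x - s) * (Az s + b * g s)) = A0 x + b * m x"
      using Keq'[of x] x g0 by simp
    then show ?thesis using d by simp
  qed
  define E where "E x = exp (- b * of_real x) * (h x - m x)" for x
  have Ed: "(E has_vector_derivative 0) (at x within {0..T})" if x: "x \<in> {0..T}" for x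
  proof -
    have e: "((\<lambda>x. exp (- b * of_real x)) has_vector_derivative (exp (- b * of_real x) * (- b))) (at x within {0..T})"
    proof -
      have "((\<lambda>y. exp (- b * y)) has_field_derivative (exp (- b * of_real x) * (- b))) (at (of_real x))"
        by (auto intro!: derivative_eq_intros)
      then show ?thesis by (rule has_vector_derivative_real_field)
    qed
    have "(E has_vector_derivative exp (- b * of_real x) * ((A0 x + b * h x) - (A0 x + b * m x)) + exp (- b * of_real x) * (- b) * (h x - m x)) (at x within {0..T})"
      unfolding E_def[abs_def] by (intro has_vector_derivative_mult e has_vector_derivative_diff hd md x)
    then show ?thesis by (simp add: algebra_simps)
  qed
  have "\<exists>c. \<forall>x\<in>{0..T}. E x = c"
    by (rule has_derivative_zero_constant[of "{0..T}" E])
       (use Ed in \<open>auto simp: has_vector_derivative_def\<close>)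
  then have "E T = E 0" using T by fastforce
  then have hm: "h T = m T" using h0 m0 by (simp add: E_def)
  have intc: "continuous_on {0..T} (\<lambda>s. K (T - s) *\<^sub>C U s z)"
    by (rule bounded_bilinear.continuous_on[OF ch_bounded_bilinear_scaleC Kshift Ucont]) (use T in auto)
  have "cinner (integral {0..T} (\<lambda>s. K (T - s) *\<^sub>C U s z)) z
      = integral {0..T} ((\<lambda>y. cinner y z) \<circ> (\<lambda>s. K (T - s) *\<^sub>C U s z))"
    by (rule integral_linear[symmetric, OF integrable_continuous_real[OF intc] ch_bounded_linear_cinner_left])
  also have "\<dots> = integral {0..T} (\<lambda>s. N * (K (T - s) * g s))"
    by (rule integral_cong) (use N in \<open>simp add: cinner_scaleC_left g_def N_def\<close>)
  also have "\<dots> = N * m T" by (simp add: m_def)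
  finally have i: "cinner (integral {0..T} (\<lambda>s. K (T - s) *\<^sub>C U s z)) z = N * m T" .
  have "cinner (U T x0) z = N * h T" using N by (simp add: h_def)
  then show "cinner (\<eta> T) z = 0"
    using eta T i hm by (simp add: ch_cinner_diff_left x0_def)
qed

end
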